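(* Every semi-complete digraph with $n$ vertices that has a feedback arc set of size at most $k$ has at most $A\cdot\exp(C\sqrt{2k})\cdot(n+1)$ $k$-cuts, where $C=\pi\sqrt{2/3}$ and $A$ is a constant such that $p(m)\le\frac{A}{m+1}\exp(C\sqrt{m})$ for all integers $m\ge0$.
   Context: A simple digraph (no loops, no multiple arcs) $T$ is semi-complete if for every pair of distinct vertices $v,w$ at least one of $(v,w),(w,v)$ is an arc. A feedback arc set is a set $F\subseteq E(T)$ with $T\setminus F$ acyclic. A $k$-cut of a digraph $T$ is an ordered partition $(X,Y)$ of $V(T)$ (either part may be empty) such that there are at most $k$ arcs $(u,v)\in E(T)$ with $u\in Y$ and $v\in X$. $p(m)$ denotes the number of partitions of the integer $m$ (multisets of positive integers summing to $m$); such a constant $A$ exists by the Hardy–Ramanujan estimate. *)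

theory Defs
  imports Complex_Main "HOL-Library.Multiset"
begin

definition partition_count :: "nat \<Rightarrow> nat" where
  "partition_count m = card {M :: nat multiset. (\<forall>x\<in>#M. 0 < x) \<and> sum_mset M = m}"

definition simple_digraph :: "'a set \<Rightarrow> ('a \<times> 'a) set \<Rightarrow> bool" where
  "simple_digraph V E \<longleftrightarrow> finite V \<and> E \<subseteq> V \<times> V \<and> (\<forall>v. (v, v) \<notin> E)"

definition semi_complete :: "'a set \<Rightarrow> ('a \<times> 'a) set \<Rightarrow> bool" where
  "semi_complete V E \<longleftrightarrow> simple_digraph V E \<and>
     (\<forall>v\<in>V. \<forall>w\<in>V. v \<noteq> w \<longrightarrow> (v, w) \<in> E \<or> (w, v) \<in> E)"

definition feedback_arc_set :: "('a \<times> 'a) set \<Rightarrow> ('a \<times> 'a) set \<Rightarrow> bool" where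
  "feedback_arc_set E F \<longleftrightarrow> F \<subseteq> E \<and> acyclic (E - F)"

definition is_k_cut :: "'a set \<Rightarrow> ('a \<times> 'a) set \<Rightarrow> nat \<Rightarrow> 'a set \<times> 'a set \<Rightarrow> bool" where
  "is_k_cut V E k XY \<longleftrightarrow> (case XY of (X, Y) \<Rightarrow>
     X \<union> Y = V \<and> X \<inter> Y = {} \<and> card {(u, v) \<in> E. u \<in> Y \<and> v \<in> X} \<le> k)"

definition k_cuts :: "'a set \<Rightarrow> ('a \<times> 'a) set \<Rightarrow> nat \<Rightarrow> ('a set \<times> 'a set) set" where
  "k_cuts V E k = {XY. is_k_cut V E k XY}"

end

theory Submission
  imports Defs
begin

definition cnt :: "nat set \<Rightarrow> nat \<Rightarrow> nat" where
  "cnt S j = card {i. i < j \<and> i \<notin> S}"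

definition MS :: "nat set \<Rightarrow> nat multiset" where
  "MS S = image_mset (cnt S) (mset_set S)"

lemma cnt_eq: "cnt S j = j - card (S \<inter> {..<j})"
proof -
  have "{i. i < j \<and> i \<notin> S} = {..<j} - S" by auto
  moreover have "card ({..<j} - S) = j - card ({..<j} \<inter> S)"
    by (subst card_Diff_subset_Int) auto
  ultimately show ?thesis unfolding cnt_def by (simp add: Int_commute)
qed

lemma cnt_mono: "j \<le> j' \<Longrightarrow> cnt S j \<le> cnt S j'"
  unfolding cnt_def by (rule card_mono) auto

lemma cnt_local: "j \<le> n \<Longrightarrow> cnt (S - {n}) j = cnt S j"
  unfolding cnt_def by (rule arg_cong[where f=card]) auto

lemma size_MS: "finite S \<Longrightarrow> size (MS S) = card S"
  unfolding MS_def by simp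

lemma MS_inj: "S \<subseteq> {..<n} \<Longrightarrow> T \<subseteq> {..<n} \<Longrightarrow> MS S = MS T \<Longrightarrow> S = T"
proof (induction n arbitrary: S T)
  case 0
  then show ?case by auto
next
  case (Suc n)
  have fS: "finite S" "finite T" using Suc.prems finite_subset by auto
  have cardeq: "card S = card T" using size_MS[OF fS(1)] size_MS[OF fS(2)] Suc.prems(3) by simp
  have cntn: "cnt U n = Suc n - card U" if U: "U \<subseteq> {..<Suc n}" and nU: "n \<in> U" for U
  proof -
    have "U \<inter> {..<n} = U - {n}" using U by auto
    moreover have "finite U" using U finite_subset by auto
    ultimately have "card (U \<inter> {..<n}) = card U - 1" using nU by simp
    moreover have "card U \<ge> 1" using nU \<open>finite U\<close> by (metis One_nat_def Suc_leI card_gt_0_iff empty_iff)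
    moreover have "card U \<le> Suc n" using card_mono[OF _ U] by simp
    ultimately show "cnt U n = Suc n - card U" by (simp add: cnt_eq)
  qed
  have key: "n \<in> U \<longleftrightarrow> (Suc n - card U) \<in># MS U" if U: "U \<subseteq> {..<Suc n}" for U
  proof
    assume nU: "n \<in> U"
    have "U \<inter> {..<n} = U - {n}" using U by auto
    moreover have "finite U" using U finite_subset by auto
    ultimately have "card (U \<inter> {..<n}) = card U - 1" using nU by simp
    moreover have "card U \<ge> 1" using nU \<open>finite U\<close> by (metis One_nat_def Suc_leI card_gt_0_iff empty_iff)
    moreover have "card U \<le> Suc n" using card_mono[OF _ U] by simp
    ultimately have "cnt U n = Suc n - card U" by (simp add: cnt_eq)
    then show "(Suc n - card U) \<in># MS U" unfolding MS_def using nU \<open>finite U\<close> by force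
  next
    assume "(Suc n - card U) \<in># MS U"
    then obtain j where j: "j \<in> U" "cnt U j = Suc n - card U" unfolding MS_def
      using U finite_subset by (auto simp: finite_subset)
    show "n \<in> U"
    proof (rule ccontr)
      assume "n \<notin> U"
      then have U': "U \<subseteq> {..<n}" using U by (metis lessThan_Suc subset_insert)
      have "j < n" using j U' by auto
      have "card U \<le> n" using card_mono[OF _ U'] by simp
      have "cnt U j \<le> cnt U n" using cnt_mono \<open>j < n\<close> by simp
      also have "\<dots> = n - card U" using U' by (simp add: cnt_eq Int_absorb2)
      finally show False using j \<open>card U \<le> n\<close> by simp
    qed
  qed
  have MS_rem: "MS U = add_mset (cnt U n) (MS (U - {n}))" if "n \<in> U" "finite U" "U \<subseteq> {..<Suc n}" for U
  proof -
    have "mset_set U = add_mset n (mset_set (U - {n}))" using that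
      by (metis finite_Diff insert_Diff mset_set.insert Diff_iff singletonI)
    then have "MS U = add_mset (cnt U n) (image_mset (cnt U) (mset_set (U - {n})))"
      unfolding MS_def by simp
    also have "image_mset (cnt U) (mset_set (U - {n})) = MS (U - {n})"
      unfolding MS_def
    proof (rule image_mset_cong)
      fix x assume "x \<in># mset_set (U - {n})"
      then have "x \<le> n" using that by auto
      then show "cnt U x = cnt (U - {n}) x" by (simp add: cnt_local)
    qed
    finally show ?thesis .
  qed
  have nn: "n \<in> S \<longleftrightarrow> n \<in> T" using key[OF Suc.prems(1)] key[OF Suc.prems(2)] Suc.prems(3) cardeq by simp
  show ?case
  proof (cases "n \<in> S")
    case True
    then have nT: "n \<in> T" using nn by simp
    have c: "cnt S n = cnt T n" using cntn[OF Suc.prems(1) True] cntn[OF Suc.prems(2) nT] cardeq by simp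
    have "MS (S - {n}) = MS (T - {n})" using MS_rem[OF True fS(1) Suc.prems(1)] MS_rem[OF nT fS(2) Suc.prems(2)] Suc.prems(3) c by simp
    moreover have "S - {n} \<subseteq> {..<n}" "T - {n} \<subseteq> {..<n}" using Suc.prems by auto
    ultimately have "S - {n} = T - {n}" using Suc.IH by blast
    then show ?thesis using True nT by (metis insert_Diff)
  next
    case False
    then have "n \<notin> T" using nn by simp
    then show ?thesis using False Suc.prems Suc.IH by (metis lessThan_Suc subset_insert)
  qed
qed

lemma topo:
  assumes "finite V" "R \<subseteq> V \<times> V" "acyclic R"
  shows "\<exists>f. bij_betw f V {..<card V} \<and> (\<forall>(u,v)\<in>R. f u < f v)"
  using assms
proof (induction "card V" arbitrary: V R)
  case 0
  then have "V = {}" by simp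
  then show ?case using 0 by (simp add: bij_betw_def)
next
  case (Suc c)
  have fR: "finite R" using Suc.prems finite_subset by blast
  have wf: "wf (R\<inverse>)" using finite_acyclic_wf_converse[OF fR Suc.prems(3)] .
  have "V \<noteq> {}" using Suc.hyps(2) by auto
  then obtain x where "x \<in> V" by auto
  obtain z where z: "z \<in> V" "\<And>y. (y, z) \<in> R\<inverse> \<Longrightarrow> y \<notin> V"
    using wfE_min[OF wf \<open>x \<in> V\<close>] by blast
  have noout: "(z, y) \<notin> R" for y using z Suc.prems(2) by auto
  define V' where "V' = V - {z}"
  define R' where "R' = R \<inter> (V' \<times> V')"
  have cV': "c = card V'" using Suc.hyps(2) z(1) Suc.prems(1) unfolding V'_def by simp
  have h1: "R' \<subseteq> V' \<times> V'" unfolding R'_def by auto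
  have h2: "acyclic R'" using acyclic_subset[OF Suc.prems(3)] unfolding R'_def by auto
  have h3: "finite V'" using Suc.prems(1) unfolding V'_def by auto
  have "\<exists>f. bij_betw f V' {..<card V'} \<and> (\<forall>(u,v)\<in>R'. f u < f v)"
    by (rule Suc.hyps(1)[OF cV' h3 h1 h2])
  then obtain f' where f': "bij_betw f' V' {..<c}" "\<forall>(u,v)\<in>R'. f' u < f' v"
    using cV' by auto
  define f where "f = f'(z := c)"
  have "bij_betw f V' {..<c} = bij_betw f' V' {..<c}" by (rule bij_betw_cong) (simp add: f_def V'_def)
  then have b1: "bij_betw f V' {..<c}" using f'(1) by simp
  have b2: "bij_betw f (V' \<union> {z}) ({..<c} \<union> {f z})"
    using notIn_Un_bij_betw3[of z V' f "{..<c}"] b1 unfolding f_def V'_def by simp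
  have "V' \<union> {z} = V" using z(1) unfolding V'_def by auto
  moreover have "{..<c} \<union> {f z} = {..<card V}" unfolding f_def using Suc.hyps(2)[symmetric] by auto
  ultimately have "bij_betw f V {..<card V}" using b2 by simp
  moreover have "\<forall>(u,v)\<in>R. f u < f v"
  proof (clarify)
    fix u v assume uv: "(u, v) \<in> R"
    then have "u \<noteq> z" using noout by auto
    show "f u < f v"
    proof (cases "v = z")
      case True
      have "u \<in> V'" using uv Suc.prems(2) \<open>u \<noteq> z\<close> unfolding V'_def by auto
      then have "f' u < c" using f'(1) by (auto simp: bij_betw_def)
      then show ?thesis using True \<open>u \<noteq> z\<close> unfolding f_def by simp
    next
      case False
      then have "(u, v) \<in> R'" using uv Suc.prems(2) \<open>u \<noteq> z\<close> unfolding R'_def V'_def by auto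
      then show ?thesis using f'(2) False \<open>u \<noteq> z\<close> unfolding f_def by auto
    qed
  qed
  ultimately show ?case by blast
qed

lemma parts_finite: "finite {M :: nat multiset. (\<forall>x\<in>#M. 0 < x) \<and> sum_mset M = m}"
proof -
  have "{M :: nat multiset. (\<forall>x\<in>#M. 0 < x) \<and> sum_mset M = m}
        \<subseteq> mset ` {xs. set xs \<subseteq> {0..m} \<and> length xs \<le> m}"
  proof
    fix M :: "nat multiset" assume M: "M \<in> {M. (\<forall>x\<in>#M. 0 < x) \<and> sum_mset M = m}"
    obtain xs where xs: "mset xs = M" using ex_mset by blast
    have "set xs \<subseteq> {0..m}"
    proof
      fix x assume "x \<in> set xs"
      then have "x \<in># M" using xs by auto
      then have "add_mset x (M - {#x#}) = M" by (rule insert_DiffM)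
      then have "sum_mset M = x + sum_mset (M - {#x#})" using sum_mset.add_mset[of x "M - {#x#}"] by simp
      then have "x \<le> sum_mset M" by simp
      then show "x \<in> {0..m}" using M by auto
    qed
    moreover have "length xs \<le> m"
    proof -
      have "size M = sum_mset (image_mset (\<lambda>_. 1::nat) M)" by (rule size_eq_sum_mset)
      also have "\<dots> \<le> sum_mset (image_mset (\<lambda>x. x) M)"
        by (rule sum_mset_mono) (use M in \<open>auto simp: Suc_le_eq\<close>)
      also have "\<dots> = m" using M by simp
      finally have "size M \<le> m" .
      moreover have "length xs = size M" by (metis size_mset xs)
      ultimately show ?thesis by simp
    qed
    ultimately show "M \<in> mset ` {xs. set xs \<subseteq> {0..m} \<and> length xs \<le> m}" using xs by (intro image_eqI[where x=xs]) auto
  qed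
  moreover have "finite (mset ` {xs. set xs \<subseteq> {0..m} \<and> length xs \<le> m})"
    by (rule finite_imageI, rule finite_lists_length_le) auto
  ultimately show ?thesis using finite_subset by blast
qed

lemma filt_decomp: "(M :: nat multiset) = filter_mset ((<) 0) M + replicate_mset (size M - size (filter_mset ((<) 0) M)) 0"
proof (induction M)
  case empty
  then show ?case by simp
next
  case (add x M)
  have le: "size (filter_mset ((<) 0) M) \<le> size M" by simp
  show ?case
  proof (cases "x = 0")
    case True
    then have "size (add_mset x M) - size (filter_mset ((<) 0) (add_mset x M)) = Suc (size M - size (filter_mset ((<) 0) M))"
      using le by (simp add: Suc_diff_le)
    then show ?thesis using True add.IH by (metis filter_mset_add_mset less_irrefl replicate_mset_Suc union_mset_add_mset_right)
  next
    case False
    then show ?thesis using add.IH by simp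
  qed
qed

lemma sum_filt: "sum_mset (filter_mset ((<) 0) M) = sum_mset (M :: nat multiset)"
  by (induction M) auto

lemma sum_MS: "finite S \<Longrightarrow> sum_mset (MS S) = card (Sigma S (\<lambda>j. {i. i < j \<and> i \<notin> S}))"
proof -
  assume fS: "finite S"
  have "sum_mset (MS S) = sum (cnt S) S" unfolding MS_def by (rule sum_unfold_sum_mset[symmetric])
  also have "\<dots> = card (Sigma S (\<lambda>j. {i. i < j \<and> i \<notin> S}))"
    using fS by (subst card_SigmaI) (auto simp: cnt_def)
  finally show ?thesis .
qed

lemma count_good:
  fixes n K :: nat
  defines "Good \<equiv> {S. S \<subseteq> {..<n} \<and> card (Sigma S (\<lambda>j. {i. i < j \<and> i \<notin> S})) \<le> K}"
  shows "card Good \<le> (n + 1) * (K + 1) * partition_count K"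
proof -
  define P where "P = {M :: nat multiset. (\<forall>x\<in>#M. 0 < x) \<and> sum_mset M = K}"
  define enc where "enc S = (card S, sum_mset (MS S),
      filter_mset ((<) 0) (MS S) + replicate_mset (K - sum_mset (MS S)) (1::nat))" for S
  define T where "T = {..n} \<times> {..K} \<times> P"
  have finP: "finite P" unfolding P_def by (rule parts_finite)
  have finT: "finite T" unfolding T_def using finP by auto
  have cardT: "card T = (n + 1) * (K + 1) * partition_count K"
    unfolding T_def card_cartesian_product P_def partition_count_def by (simp add: algebra_simps)
  have sub: "enc ` Good \<subseteq> T"
  proof
    fix z assume "z \<in> enc ` Good"
    then obtain S where S: "S \<in> Good" "z = enc S" by auto
    have Sn: "S \<subseteq> {..<n}" using S unfolding Good_def by auto
    then have fS: "finite S" using finite_subset by blast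
    have c1: "card S \<le> n" using card_mono[OF _ Sn] by simp
    have c2: "sum_mset (MS S) \<le> K" using S sum_MS[OF fS] unfolding Good_def by auto
    have c3: "filter_mset ((<) 0) (MS S) + replicate_mset (K - sum_mset (MS S)) (1::nat) \<in> P"
      unfolding P_def using c2 by (auto simp: sum_filt)
    show "z \<in> T" using S(2) c1 c2 c3 unfolding enc_def T_def by auto
  qed
  have inj: "inj_on enc Good"
  proof (rule inj_onI)
    fix S1 S2 assume S1: "S1 \<in> Good" and S2: "S2 \<in> Good" and e: "enc S1 = enc S2"
    have Sn: "S1 \<subseteq> {..<n}" "S2 \<subseteq> {..<n}" using S1 S2 unfolding Good_def by auto
    then have fS: "finite S1" "finite S2" using finite_subset by blast+
    from e have ce: "card S1 = card S2" and se: "sum_mset (MS S1) = sum_mset (MS S2)"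
      and fe: "filter_mset ((<) 0) (MS S1) + replicate_mset (K - sum_mset (MS S1)) (1::nat)
             = filter_mset ((<) 0) (MS S2) + replicate_mset (K - sum_mset (MS S2)) (1::nat)"
      unfolding enc_def by auto
    from fe se have fe2: "filter_mset ((<) 0) (MS S1) = filter_mset ((<) 0) (MS S2)" by simp
    have sz: "size (MS S1) = size (MS S2)" using ce size_MS fS by simp
    have "MS S1 = MS S2"
      using filt_decomp[of "MS S1"] filt_decomp[of "MS S2"] fe2 sz by simp
    then show "S1 = S2" using MS_inj Sn by blast
  qed
  have "card Good \<le> card T" using card_inj_on_le[OF inj sub finT] .
  then show ?thesis using cardT by simp
qed

theorem mainTheorem9:
  fixes V :: "'a set" and E :: "('a \<times> 'a) set" and n k :: nat and A :: real
  assumes "semi_complete V E"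
    and "card V = n"
    and "\<exists>F. feedback_arc_set E F \<and> card F \<le> k"
    and "\<forall>m::nat. real (partition_count m)
           \<le> A / (real m + 1) * exp (pi * sqrt (2 / 3) * sqrt (real m))"
  shows "real (card (k_cuts V E k))
           \<le> A * exp (pi * sqrt (2 / 3) * sqrt (2 * real k)) * (real n + 1)"
proof -
  have fin: "finite V" and EV: "E \<subseteq> V \<times> V"
    and semi: "\<And>v w. v \<in> V \<Longrightarrow> w \<in> V \<Longrightarrow> v \<noteq> w \<Longrightarrow> (v, w) \<in> E \<or> (w, v) \<in> E"
    using assms(1) unfolding semi_complete_def simple_digraph_def by auto
  obtain F where F: "F \<subseteq> E" "acyclic (E - F)" "card F \<le> k"
    using assms(3) unfolding feedback_arc_set_def by auto
  have finE: "finite E" using EV fin finite_subset by blast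
  have "E - F \<subseteq> V \<times> V" using EV by auto
  then obtain f where fb: "bij_betw f V {..<n}" and fo: "\<forall>(u,v)\<in>E - F. f u < f v"
    using topo[OF fin _ F(2)] assms(2) by blast
  define g where "g = the_inv_into V f"
  have gf: "g (f x) = x" if "x \<in> V" for x
    unfolding g_def using fb that by (simp add: bij_betw_def the_inv_into_f_f)
  have fg: "g j \<in> V \<and> f (g j) = j" if "j < n" for j
  proof -
    have inj: "inj_on f V" and jV: "j \<in> f ` V" using fb that by (auto simp: bij_betw_def)
    show ?thesis unfolding g_def using the_inv_into_into[OF inj jV order_refl] f_the_inv_into_f[OF inj jV] by simp
  qed
  have fV: "f x < n" if "x \<in> V" for x using fb that by (auto simp: bij_betw_def)
  define Inv where "Inv S = Sigma S (\<lambda>j. {i. i < j \<and> i \<notin> S})" for S :: "nat set"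
  define Good where "Good = {S. S \<subseteq> {..<n} \<and> card (Inv S) \<le> 2 * k}"
  have finGood: "finite Good" unfolding Good_def by (rule finite_subset[of _ "Pow {..<n}"]) auto
  have img: "f ` X \<in> Good" if XY: "(X, Y) \<in> k_cuts V E k" for X Y
  proof -
    define C where "C = {(u, v) \<in> E. u \<in> Y \<and> v \<in> X}"
    have XYp: "X \<union> Y = V" "X \<inter> Y = {}" "card C \<le> k"
      using XY unfolding k_cuts_def is_k_cut_def C_def by auto
    define S where "S = f ` X"
    have Sn: "S \<subseteq> {..<n}" unfolding S_def using XYp fV by auto
    define \<phi> where "\<phi> = (\<lambda>(j::nat, i::nat). if (g i, g j) \<in> E then (g i, g j) else (g j, g i))"
    have mem: "g j \<in> X \<and> g i \<in> Y \<and> i < j \<and> j < n" if "(j, i) \<in> Inv S" for j i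
    proof -
      from that have j: "j \<in> S" "i < j" "i \<notin> S" unfolding Inv_def by auto
      then obtain x where x: "x \<in> X" "j = f x" unfolding S_def by auto
      have "x \<in> V" using x XYp by auto
      then have "g j = x" using gf x by simp
      moreover have "j < n" using j Sn by auto
      moreover have "g i \<in> V" "f (g i) = i" using fg[of i] j \<open>j < n\<close> by auto
      moreover have "g i \<notin> X" using j \<open>f (g i) = i\<close> unfolding S_def by force
      ultimately show ?thesis using x j XYp by auto
    qed
    have into: "\<phi> ` Inv S \<subseteq> C \<union> F"
    proof
      fix z assume "z \<in> \<phi> ` Inv S"
      then obtain j i where ji: "(j, i) \<in> Inv S" "z = \<phi> (j, i)" by auto
      note m = mem[OF ji(1)]
      have fgj: "f (g j) = j" "g j \<in> V" using fg m by auto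
      have fgi: "f (g i) = i" "g i \<in> V" using fg m by auto
      show "z \<in> C \<union> F"
      proof (cases "(g i, g j) \<in> E")
        case True
        then show ?thesis using ji m unfolding \<phi>_def C_def by auto
      next
        case False
        have "g i \<noteq> g j" using fgi fgj m by auto
        then have E1: "(g j, g i) \<in> E" using semi[OF fgj(2) fgi(2)] False by auto
        have "(g j, g i) \<in> F"
        proof (rule ccontr)
          assume "(g j, g i) \<notin> F"
          then have "f (g j) < f (g i)" using fo E1 by auto
          then show False using fgi fgj m by auto
        qed
        then show ?thesis using ji False unfolding \<phi>_def by auto
      qed
    qed
    have inj: "inj_on \<phi> (Inv S)"
    proof (rule inj_onI)
      fix a b assume a: "a \<in> Inv S" and b: "b \<in> Inv S" and e: "\<phi> a = \<phi> b"
      obtain j i where [simp]: "a = (j, i)" by (cases a)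
      obtain j' i' where [simp]: "b = (j', i')" by (cases b)
      note ma = mem[of j i] and mb = mem[of j' i']
      have ma': "i < j" "j < n" using ma a by auto
      have mb': "i' < j'" "j' < n" using mb b by auto
      have fi: "f (g i) = i" "f (g j) = j" "f (g i') = i'" "f (g j') = j'"
        using fg ma' mb' by auto
      have "(g i = g i' \<and> g j = g j') \<or> (g i = g j' \<and> g j = g i')"
        using e unfolding \<phi>_def by (auto split: if_splits)
      then show "a = b"
      proof
        assume "g i = g i' \<and> g j = g j'"
        then have "f (g i) = f (g i')" "f (g j) = f (g j')" by simp_all
        then show ?thesis using fi by simp
      next
        assume "g i = g j' \<and> g j = g i'"
        then have "f (g i) = f (g j')" "f (g j) = f (g i')" by simp_all
        then have "i = j'" "j = i'" using fi by simp_all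
        then show ?thesis using ma' mb' by auto
      qed
    qed
    have finCF: "finite (C \<union> F)" using finE F(1) unfolding C_def by (auto intro: finite_subset)
    have "card (Inv S) \<le> card (C \<union> F)" using card_inj_on_le[OF inj into finCF] .
    also have "\<dots> \<le> card C + card F" by (rule card_Un_le)
    also have "\<dots> \<le> 2 * k" using XYp F by simp
    finally show ?thesis using Sn unfolding Good_def S_def by auto
  qed
  have injc: "inj_on (\<lambda>XY. f ` fst XY) (k_cuts V E k)"
  proof (rule inj_onI)
    fix a b assume a: "a \<in> k_cuts V E k" and b: "b \<in> k_cuts V E k" and e: "f ` fst a = f ` fst b"
    obtain X Y where [simp]: "a = (X, Y)" by (cases a)
    obtain X' Y' where [simp]: "b = (X', Y')" by (cases b)
    have h: "X \<union> Y = V" "X \<inter> Y = {}" "X' \<union> Y' = V" "X' \<inter> Y' = {}"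
      using a b unfolding k_cuts_def is_k_cut_def by auto
    have "inj_on f V" using fb by (simp add: bij_betw_def)
    moreover have "X \<subseteq> V" "X' \<subseteq> V" using h by auto
    ultimately have "X = X'" using e inj_on_image_eq_iff by (metis \<open>a = (X, Y)\<close> \<open>b = (X', Y')\<close> fst_conv)
    moreover then have "Y = Y'" using h by blast
    ultimately show "a = b" by simp
  qed
  have subc: "(\<lambda>XY. f ` fst XY) ` k_cuts V E k \<subseteq> Good"
    using img by auto
  have c1: "card (k_cuts V E k) \<le> card Good" using card_inj_on_le[OF injc subc finGood] .
  have c2: "card Good \<le> (n + 1) * (2 * k + 1) * partition_count (2 * k)"
    using count_good[of n "2 * k"] unfolding Good_def Inv_def by simp
  define C0 where "C0 = exp (pi * sqrt (2 / 3) * sqrt (2 * real k))"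
  have p: "real (partition_count (2 * k)) \<le> A / (2 * real k + 1) * C0"
    using assms(4)[rule_format, of "2 * k"] unfolding C0_def by simp
  have "card (k_cuts V E k) \<le> (n + 1) * (2 * k + 1) * partition_count (2 * k)" using c1 c2 by linarith
  then have "real (card (k_cuts V E k)) \<le> real ((n + 1) * (2 * k + 1) * partition_count (2 * k))"
    by (rule of_nat_mono)
  also have "\<dots> = (real n + 1) * (2 * real k + 1) * real (partition_count (2 * k))" by (simp add: algebra_simps)
  finally have "real (card (k_cuts V E k)) \<le> (real n + 1) * (2 * real k + 1) * real (partition_count (2 * k))" .
  also have "\<dots> \<le> (real n + 1) * (2 * real k + 1) * (A / (2 * real k + 1) * C0)"
    by (rule mult_left_mono[OF p]) simp
  also have "\<dots> = A * C0 * (real n + 1)" by (simp add: field_simps)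
  finally show ?thesis unfolding C0_def .
qed

end
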